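(* Let $f_1,\dots,f_n$ be monotone linear functions that are not colinear. Then every locally optimal permutation for $f_1,\dots,f_n$ is counterclockwise.
   Context: A linear function is $f(x)=ax+b$; monotone means $a>0$; identical means $f(x)=x$. $\vec f=(b,1-a)^\top$ and $\theta(f)\in[0,2\pi)$ is its polar angle ($\bot$ if $\vec f=0$). For a permutation $\sigma$ of $[n]$, $f^\sigma=f_{\sigma(n)}\circ\cdots\circ f_{\sigma(1)}$; $g\le h$ for functions means pointwise. For integers $1\le\ell\le m<r\le n$, $\sigma_{\ell,m,r}$ is the permutation obtained from $\sigma$ by swapping the adjacent blocks $(\sigma(\ell),\dots,\sigma(m))$ and $(\sigma(m+1),\dots,\sigma(r))$: $\sigma_{\ell,m,r}(i)=\sigma(i)$ for $i<\ell$ or $i>r$, $\sigma_{\ell,m,r}(i)=\sigma(i-\ell+m+1)$ for $\ell\le i<\ell-m+r$, and $\sigma_{\ell,m,r}(i)=\sigma(i+m-r)$ for $\ell-m+r\le i\le r$. The neighborhood is $N(\sigma)=\{\sigma_{\ell,m,r}\mid 1\le\ell\le m<r\le n\}$, and $\sigma$ is locally optimal if $f^\sigma\le f^\mu$ for all $\mu\in N(\sigma)$. $\sigma$ is counterclockwise if, after discarding positions $i$ with $f_{\sigma(i)}$ identical, there is $k$ such that $\theta(f_{\sigma(k)})\le\cdots\le\theta(f_{\sigma(n)})\le\theta(f_{\sigma(1)})\le\cdots\le\theta(f_{\sigma(k-1)})$. $f_1,\dots,f_n$ are colinear if there is $\lambda$ with $\theta(f_i)-\lambda\in\{0,\pi\}+2\pi\mathbb{Z}$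 or $\theta(f_i)=\bot$ for all $i$. *)

theory Defs
  imports "HOL-Analysis.Analysis" "HOL-Combinatorics.Permutations"
begin

type_synonym linfun = "real \<times> real"

definition lf_apply :: "linfun \<Rightarrow> real \<Rightarrow> real" where
  "lf_apply f x = fst f * x + snd f"

definition monotone_lf :: "linfun \<Rightarrow> bool" where
  "monotone_lf f \<longleftrightarrow> fst f > 0"

definition identical_lf :: "linfun \<Rightarrow> bool" where
  "identical_lf f \<longleftrightarrow> (\<forall>x. lf_apply f x = x)"

definition lf_vec :: "linfun \<Rightarrow> complex" where
  "lf_vec f = Complex (snd f) (1 - fst f)"

text \<open>Polar angle in [0, 2 pi); None plays the role of bottom (zero vector).\<close>
definition theta :: "linfun \<Rightarrow> real option" where
  "theta f = (if lf_vec f = 0 then None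
              else Some (if Arg (lf_vec f) < 0 then Arg (lf_vec f) + 2 * pi else Arg (lf_vec f)))"

text \<open>f^sigma = f_{sigma(k)} o ... o f_{sigma(1)}, indices 1-based.\<close>
fun comp_perm :: "(nat \<Rightarrow> linfun) \<Rightarrow> (nat \<Rightarrow> nat) \<Rightarrow> nat \<Rightarrow> real \<Rightarrow> real" where
  "comp_perm F \<sigma> 0 = id"
| "comp_perm F \<sigma> (Suc k) = lf_apply (F (\<sigma> (Suc k))) \<circ> comp_perm F \<sigma> k"

definition block_swap :: "(nat \<Rightarrow> nat) \<Rightarrow> nat \<Rightarrow> nat \<Rightarrow> nat \<Rightarrow> nat \<Rightarrow> nat" where
  "block_swap \<sigma> l m r i =
     (if i < l \<or> r < i then \<sigma> i
      else if i < l + r - m then \<sigma> (i + m + 1 - l)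
      else \<sigma> (i + m - r))"

definition neighborhood :: "nat \<Rightarrow> (nat \<Rightarrow> nat) \<Rightarrow> (nat \<Rightarrow> nat) set" where
  "neighborhood n \<sigma> = {block_swap \<sigma> l m r | l m r. 1 \<le> l \<and> l \<le> m \<and> m < r \<and> r \<le> n}"

definition locally_optimal :: "(nat \<Rightarrow> linfun) \<Rightarrow> nat \<Rightarrow> (nat \<Rightarrow> nat) \<Rightarrow> bool" where
  "locally_optimal F n \<sigma> \<longleftrightarrow>
     (\<forall>\<mu>\<in>neighborhood n \<sigma>. \<forall>x. comp_perm F \<sigma> n x \<le> comp_perm F \<mu> n x)"

definition angle_seq :: "(nat \<Rightarrow> linfun) \<Rightarrow> nat \<Rightarrow> (nat \<Rightarrow> nat) \<Rightarrow> real list" where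
  "angle_seq F n \<sigma> =
     map (\<lambda>i. the (theta (F (\<sigma> i)))) (filter (\<lambda>i. \<not> identical_lf (F (\<sigma> i))) [1..<n+1])"

definition counterclockwise :: "(nat \<Rightarrow> linfun) \<Rightarrow> nat \<Rightarrow> (nat \<Rightarrow> nat) \<Rightarrow> bool" where
  "counterclockwise F n \<sigma> \<longleftrightarrow> (\<exists>k. sorted (rotate k (angle_seq F n \<sigma>)))"

definition colinear :: "(nat \<Rightarrow> linfun) \<Rightarrow> nat \<Rightarrow> bool" where
  "colinear F n \<longleftrightarrow> (\<exists>c::real. \<forall>i\<in>{1..n}.
      theta (F i) = None \<or> (\<exists>t. theta (F i) = Some t \<and> (\<exists>k::int. t - c = of_int k * pi)))"

end

theory Submission
  imports Defs
begin


definition ang :: "complex \<Rightarrow> real" where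
  "ang z = (if Arg z < 0 then Arg z + 2 * pi else Arg z)"

definition cross :: "complex \<Rightarrow> complex \<Rightarrow> real" where
  "cross u v = Re u * Im v - Im u * Re v"

definition dot :: "complex \<Rightarrow> complex \<Rightarrow> real" where
  "dot u v = Re u * Re v + Im u * Im v"

lemma theta_ang: "theta f = (if lf_vec f = 0 then None else Some (ang (lf_vec f)))"
  by (simp add: theta_def ang_def)

lemma ang_bounds: "0 \<le> ang z" "ang z < 2 * pi"
  using Arg_bounded[of z] pi_gt_zero by (auto simp: ang_def)

lemma rcis_2pi: "rcis r (t + 2 * pi) = rcis r t"
  by (simp add: rcis_def cis.ctr complex_eq_iff)

lemma rcis_ang: "rcis (cmod z) (ang z) = z"
  by (simp add: ang_def rcis_2pi rcis_cmod_Arg)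

lemma ang_rcis:
  assumes "r > 0" "0 \<le> t" "t < 2 * pi"
  shows "ang (rcis r t) = t"
proof (cases "t \<le> pi")
  case True
  then have "Arg (rcis r t) = t" using assms by (intro Arg_unique') auto
  then show ?thesis using assms by (simp add: ang_def)
next
  case False
  have "rcis r t = rcis r (t - 2 * pi)" using rcis_2pi[of r "t - 2*pi"] by simp
  then have "Arg (rcis r t) = t - 2 * pi" using assms False by (intro Arg_unique') auto
  then show ?thesis using assms False by (simp add: ang_def)
qed

lemma Re_ang: "Re z = cmod z * cos (ang z)"
  by (metis Re_rcis rcis_ang)
lemma Im_ang: "Im z = cmod z * sin (ang z)"
  by (metis Im_rcis rcis_ang)

lemma cross_ang: "cross u v = cmod u * cmod v * sin (ang v - ang u)"
  unfolding cross_def sin_diff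
  by (subst (1 2) Re_ang, subst (1 2) Im_ang) (simp add: algebra_simps)

lemma dot_ang: "dot u v = cmod u * cmod v * cos (ang v - ang u)"
  unfolding dot_def cos_diff
  by (subst (1 2) Re_ang, subst (1 2) Im_ang) (simp add: algebra_simps)

lemma ang_Hplus: "Im z > 0 \<or> (Im z = 0 \<and> Re z > 0) \<Longrightarrow> ang z < pi"
  using Arg_lt_pi[of z] Arg_eq_0[of z] Arg_le_pi[of z] Arg_less_0[of z]
  by (auto simp: ang_def complex_is_Real_iff)

lemma ang_Im_nonneg: "Im z \<ge> 0 \<Longrightarrow> ang z \<le> pi"
  using Arg_le_pi[of z] Arg_less_0[of z] by (auto simp: ang_def)

lemma ang_negreal: "Im z = 0 \<Longrightarrow> Re z < 0 \<Longrightarrow> ang z = pi"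
  using Arg_eq_pi[of z] by (auto simp: ang_def)

lemma ang_posreal: "Im z = 0 \<Longrightarrow> Re z > 0 \<Longrightarrow> ang z = 0"
  using Arg_eq_0[of z] by (auto simp: ang_def complex_is_Real_iff)

lemma sin_nonneg_range:
  assumes "- pi < t" "t < 2 * pi" "sin t \<ge> 0"
  shows "0 \<le> t \<and> t \<le> pi"
proof -
  have "\<not> t < 0"
  proof
    assume "t < 0"
    then have "sin (- t) > 0" using assms by (intro sin_gt_zero) auto
    then show False using assms by simp
  qed
  moreover have "\<not> t > pi" using sin_lt_zero[of t] assms by auto
  ultimately show ?thesis by auto
qed

lemma pos_mult_nonneg: "(c::real) > 0 \<Longrightarrow> 0 \<le> c * s \<Longrightarrow> 0 \<le> s"
  by (simp add: zero_le_mult_iff)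

lemma window:
  assumes HP: "Im P > 0 \<or> (Im P = 0 \<and> Re P > 0)"
    and u0: "u \<noteq> 0" and v0: "v \<noteq> 0" and P0: "P \<noteq> 0"
    and cu: "cross P u \<ge> 0" and cv: "cross P v \<ge> 0" and cuv: "cross u v \<ge> 0"
    and nap: "\<not> (cross u v = 0 \<and> dot u v < 0)"
  shows "ang u \<le> ang v"
proof -
  have pb: "0 \<le> ang P" "ang P < pi" using ang_bounds[of P] ang_Hplus[OF HP] by auto
  have xb: "0 \<le> ang u" "ang u < 2*pi" "0 \<le> ang v" "ang v < 2*pi" using ang_bounds by auto
  have pos: "cmod P * cmod u > 0" "cmod P * cmod v > 0" "cmod u * cmod v > 0"
    using u0 v0 P0 by (simp_all add: mult_pos_pos)
  have s1: "sin (ang u - ang P) \<ge> 0" using pos(1) cu unfolding cross_ang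
    by (rule pos_mult_nonneg[of "cmod P * cmod u"])
  have s2: "sin (ang v - ang P) \<ge> 0" using pos(2) cv unfolding cross_ang
    by (rule pos_mult_nonneg[of "cmod P * cmod v"])
  have sxy: "sin (ang v - ang u) \<ge> 0" using pos(3) cuv unfolding cross_ang
    by (rule pos_mult_nonneg[of "cmod u * cmod v"])
  have r1: "0 \<le> ang u - ang P \<and> ang u - ang P \<le> pi"
    using pb xb s1 by (intro sin_nonneg_range) (linarith, linarith, assumption)
  have r2: "0 \<le> ang v - ang P \<and> ang v - ang P \<le> pi"
    using pb xb s2 by (intro sin_nonneg_range) (linarith, linarith, assumption)
  show ?thesis
  proof (cases "ang v - ang u = - pi")
    case True
    then have "sin (ang v - ang u) = 0" "cos (ang v - ang u) = -1"
      by simp_all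
    then have "cross u v = 0" "dot u v < 0" using pos(3)
      unfolding cross_ang dot_ang by simp_all
    then show ?thesis using nap by blast
  next
    case False
    then have "- pi < ang v - ang u" using r1 r2 by linarith
    then have "0 \<le> ang v - ang u" using sin_nonneg_range[of "ang v - ang u"] r1 r2 sxy pi_gt_zero by linarith
    then show ?thesis by linarith
  qed
qed

lemma ang_mult:
  assumes "u \<noteq> 0" "v \<noteq> 0"
  shows "ang (u * v) = ang u + ang v \<or> ang (u * v) = ang u + ang v - 2 * pi"
proof -
  have e: "u * v = rcis (cmod u * cmod v) (ang u + ang v)"
    by (metis rcis_ang rcis_mult)
  have pos: "cmod u * cmod v > 0" using assms by auto
  show ?thesis
  proof (cases "ang u + ang v < 2 * pi")
    case True
    then show ?thesis using e ang_rcis[OF pos] ang_bounds[of u] ang_bounds[of v] by auto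
  next
    case False
    have "u * v = rcis (cmod u * cmod v) (ang u + ang v - 2 * pi)"
      using e rcis_2pi[of _ "ang u + ang v - 2*pi"] by simp
    then show ?thesis using False ang_rcis[OF pos] ang_bounds[of u] ang_bounds[of v] by auto
  qed
qed



lemma sorted_rotate_exists:
  fixes xs :: "real list" and t0 :: real and \<beta> :: "nat \<Rightarrow> real"
  assumes h1: "\<forall>i<length xs. xs!i = t0 + \<beta> i \<or> xs!i = t0 + \<beta> i - 2*pi"
    and h2: "\<forall>i<length xs. 0 \<le> xs!i \<and> xs!i < 2*pi"
    and h3: "\<forall>i j. i \<le> j \<longrightarrow> j < length xs \<longrightarrow> \<beta> i \<le> \<beta> j"
    and h4: "\<forall>i<length xs. 0 \<le> \<beta> i \<and> \<beta> i \<le> 2*pi"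
    and h5: "0 \<le> t0" "t0 < 2*pi"
  shows "\<exists>k. sorted (rotate k xs)"
proof -
  define c where "c i \<longleftrightarrow> t0 + \<beta> i \<ge> 2*pi" for i
  have xc: "xs!i = (if c i then t0 + \<beta> i - 2*pi else t0 + \<beta> i)" if "i < length xs" for i
  proof -
    have a: "xs!i = t0 + \<beta> i \<or> xs!i = t0 + \<beta> i - 2*pi" "0 \<le> xs!i" "xs!i < 2*pi"
      using h1 h2 that by auto
    show ?thesis
    proof (cases "c i")
      case True
      then have "t0 + \<beta> i \<ge> 2*pi" unfolding c_def by simp
      then have "xs!i = t0 + \<beta> i - 2*pi" using a by linarith
      then show ?thesis using True by simp
    next
      case False
      then have "t0 + \<beta> i < 2*pi" unfolding c_def by simp
      then have "xs!i = t0 + \<beta> i" using a by linarith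
      then show ?thesis using False by simp
    qed
  qed
  have cm: "c i \<Longrightarrow> i \<le> j \<Longrightarrow> j < length xs \<Longrightarrow> c j" for i j
  proof -
    assume a: "c i" "i \<le> j" "j < length xs"
    then have "\<beta> i \<le> \<beta> j" using h3 by blast
    then show "c j" using a(1) unfolding c_def by linarith
  qed
  show ?thesis
  proof (cases "\<exists>i<length xs. c i")
    case False
    have "sorted xs" unfolding sorted_iff_nth_mono
    proof (intro allI impI)
      fix i j assume "i \<le> j" "j < length xs"
      then have "\<beta> i \<le> \<beta> j" "i < length xs" using h3 by auto
      then show "xs!i \<le> xs!j" using xc[of i] xc[of j] False \<open>j < length xs\<close> by simp
    qed
    then have "sorted (rotate 0 xs)" by simp
    then show ?thesis by blast
  next
    case True
    define k where "k = (LEAST i. i < length xs \<and> c i)"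
    have kl: "k < length xs" "c k" using LeastI_ex[OF True] unfolding k_def by auto
    have kmin: "\<not> c i" if "i < k" for i
      using not_less_Least[of i "\<lambda>i. i < length xs \<and> c i"] that kl unfolding k_def by auto
    have ck: "c i" if "k \<le> i" "i < length xs" for i using cm[OF kl(2)] that by auto
    have rot: "rotate k xs = drop k xs @ take k xs"
      using kl by (simp add: rotate_drop_take)
    have s1: "sorted (drop k xs)" unfolding sorted_iff_nth_mono
    proof (intro allI impI)
      fix i j assume "i \<le> j" "j < length (drop k xs)"
      then have a: "k+i < length xs" "k+j < length xs" "k + i \<le> k + j" by auto
      have "\<beta> (k+i) \<le> \<beta> (k+j)" using h3 a by blast
      then show "drop k xs!i \<le> drop k xs!j"
        using xc[OF a(1)] xc[OF a(2)] ck[of "k+i"] ck[of "k+j"] a kl(1) by simp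
    qed
    have s2: "sorted (take k xs)" unfolding sorted_iff_nth_mono
    proof (intro allI impI)
      fix i j assume "i \<le> j" "j < length (take k xs)"
      then have a: "i < k" "j < k" "j < length xs" "i < length xs" using kl(1) by auto
      have "\<beta> i \<le> \<beta> j" using h3 a \<open>i \<le> j\<close> by blast
      then show "take k xs!i \<le> take k xs!j"
        using xc[OF a(4)] xc[OF a(3)] kmin[OF a(1)] kmin[OF a(2)] a by simp
    qed
    have s3: "x \<le> y" if xin: "x \<in> set (drop k xs)" and yin: "y \<in> set (take k xs)" for x y
    proof -
      obtain i where i: "i < length (drop k xs)" "x = drop k xs ! i" using xin by (metis in_set_conv_nth)
      obtain j where j: "j < length (take k xs)" "y = take k xs ! j" using yin by (metis in_set_conv_nth)
      have a: "k+i < length xs" "j < k" "j < length xs" using i j kl(1) by auto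
      have "x = t0 + \<beta> (k+i) - 2*pi" using i(2) xc[OF a(1)] ck[of "k+i"] a kl(1) by simp
      moreover have "y = t0 + \<beta> j" using j(2) xc[OF a(3)] kmin[OF a(2)] a by simp
      moreover have "\<beta> (k+i) \<le> 2*pi" "0 \<le> \<beta> j" using h4 a by auto
      ultimately show ?thesis by linarith
    qed
    have "sorted (rotate k xs)" unfolding rot sorted_append using s1 s2 s3 by blast
    then show ?thesis by blast
  qed
qed



lemma cross_scale_l[simp]: "cross (of_real c * u) v = c * cross u v"
  by (simp add: cross_def algebra_simps)
lemma cross_scale_r[simp]: "cross u (of_real c * v) = c * cross u v"
  by (simp add: cross_def algebra_simps)
lemma cross_add_r[simp]: "cross u (v + z) = cross u v + cross u z"
  by (simp add: cross_def algebra_simps)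
lemma cross_add_l[simp]: "cross (u + z) v = cross u v + cross z v"
  by (simp add: cross_def algebra_simps)
lemma cross_self[simp]: "cross u u = 0"
  by (simp add: cross_def)
lemma cross_anti: "cross v u = - cross u v"
  by (simp add: cross_def)
lemma cross_zero[simp]: "cross 0 u = 0" "cross u 0 = 0"
  by (simp_all add: cross_def)
lemma cross_ofreal: "cross (of_real c) v = c * Im v"
  by (simp add: cross_def)
lemma cross_ofreal_r: "cross v (of_real c) = - c * Im v"
  by (simp add: cross_def)
lemma dot_scale_r[simp]: "dot u (of_real c * v) = c * dot u v"
  by (simp add: dot_def algebra_simps)
lemma dot_self: "dot u u = (cmod u)^2"
  by (simp add: dot_def cmod_def power2_eq_square)

lemma col_mult:
  assumes "u \<noteq> 0" "cross u v = 0"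
  shows "\<exists>c. v = of_real c * u"
proof -
  define c where "c = dot u v / (cmod u)^2"
  have n: "(cmod u)^2 = Re u * Re u + Im u * Im u" by (simp add: cmod_def power2_eq_square)
  have np: "Re u * Re u + Im u * Im u \<noteq> 0" using assms(1) n by auto
  have "v = of_real c * u"
  proof (rule complex_eqI)
    show "Re v = Re (of_real c * u)" using assms(2) np unfolding c_def n
      by (simp add: cross_def dot_def field_simps)
    show "Im v = Im (of_real c * u)" using assms(2) np unfolding c_def n
      by (simp add: cross_def dot_def field_simps)
  qed
  then show ?thesis by blast
qed

fun Vs :: "(nat \<Rightarrow> real) \<Rightarrow> (nat \<Rightarrow> complex) \<Rightarrow> nat \<Rightarrow> nat \<Rightarrow> complex" where
  "Vs a w l 0 = 0"
| "Vs a w l (Suc j) = (if j < l then 0 else of_real (a j) * Vs a w l j + w j)"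

lemma Vs_same[simp]: "Vs a w l l = 0"
  by (cases l) auto

lemma Vs_one[simp]: "Vs a w l (Suc l) = w l"
  by simp

lemma Vs_step: "l \<le> j \<Longrightarrow> Vs a w l (Suc j) = of_real (a j) * Vs a w l j + w j"
  by simp

lemma Vs_split:
  assumes "l \<le> k" "k \<le> j"
  shows "Vs a w l j = of_real (\<Prod>i\<in>{k..<j}. a i) * Vs a w l k + Vs a w k j"
  using assms(2)
proof (induction j)
  case 0
  then show ?case by simp
next
  case (Suc j)
  show ?case
  proof (cases "k = Suc j")
    case True
    then show ?thesis by simp
  next
    case False
    then have kj: "k \<le> j" using Suc by simp
    have "Vs a w l (Suc j) = of_real (a j) * Vs a w l j + w j" using assms(1) kj by simp
    also have "\<dots> = of_real (a j * (\<Prod>i\<in>{k..<j}. a i)) * Vs a w l k + (of_real (a j) * Vs a w k j + w j)"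
      using Suc.IH[OF kj] by (simp add: algebra_simps)
    also have "\<dots> = of_real (\<Prod>i\<in>{k..<Suc j}. a i) * Vs a w l k + Vs a w k (Suc j)"
      using kj by (simp add: prod.atLeastLessThan_Suc mult.commute)
    finally show ?thesis .
  qed
qed

lemma prodpos: "(\<forall>i<(m::nat). a i > (0::real)) \<Longrightarrow> j \<le> m \<Longrightarrow> (\<Prod>i\<in>{k..<j}. a i) > 0"
proof (rule prod_pos)
  fix i assume h: "\<forall>i<m. a i > (0::real)" "j \<le> m" "i \<in> {k..<j}"
  then have "i < m" by auto
  then show "a i > 0" using h(1) by blast
qed

lemma Vs_posmult:
  assumes "l < j" "\<forall>r. l \<le> r \<and> r < j \<longrightarrow> (\<exists>\<nu>>0. w r = of_real \<nu> * z)"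
    and "\<forall>r. l \<le> r \<and> r < j \<longrightarrow> a r > 0"
  shows "\<exists>\<nu>>0. Vs a w l j = of_real \<nu> * z"
  using assms
proof (induction j)
  case 0
  then show ?case by simp
next
  case (Suc j)
  show ?case
  proof (cases "l = j")
    case True
    then show ?thesis using Suc.prems by simp
  next
    case False
    then have lj: "l < j" using Suc.prems by simp
    obtain \<nu> where \<nu>: "\<nu> > 0" "Vs a w l j = of_real \<nu> * z" using Suc.IH[OF lj] Suc.prems by auto
    obtain \<rho> where \<rho>: "\<rho> > 0" "w j = of_real \<rho> * z" using Suc.prems(2)[rule_format, of j] lj by auto
    have aj: "a j > 0" using Suc.prems(3) lj by auto
    have "Vs a w l (Suc j) = of_real (a j * \<nu> + \<rho>) * z" using lj \<nu> \<rho>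
      by (simp add: algebra_simps)
    moreover have "a j * \<nu> + \<rho> > 0" using aj \<nu> \<rho> by (simp add: add_pos_pos)
    ultimately show ?thesis by blast
  qed
qed



locale cfg =
  fixes a :: "nat \<Rightarrow> real" and w :: "nat \<Rightarrow> complex" and m :: nat
  assumes wnz: "\<And>i. i < m \<Longrightarrow> w i \<noteq> 0"
    and apos: "\<And>i. i < m \<Longrightarrow> a i > 0"
    and good: "\<And>l k j. l < k \<Longrightarrow> k < j \<Longrightarrow> j \<le> m \<Longrightarrow> cross (Vs a w l k) (Vs a w k j) \<ge> 0"
begin

lemma neg_mult_nonneg: "(k::real) < 0 \<Longrightarrow> 0 \<le> k * x \<Longrightarrow> x \<le> 0"
  by (smt (verit) mult_neg_pos)

lemma cross_col: "cross u (of_real c * u + x) = cross u x"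
  by simp

lemma adj: "Suc i < m \<Longrightarrow> cross (w i) (w (Suc i)) \<ge> 0"
  using good[of i "Suc i" "Suc (Suc i)"] by simp

lemma fwd_step:
  assumes i: "Suc i < m" and pq: "p \<le> q" "q < i"
    and mu: "\<mu> < 0" "w (Suc q) = of_real \<mu> * w q"
    and pm: "\<forall>r. Suc q \<le> r \<and> r \<le> i \<longrightarrow> (\<exists>\<nu>>0. w r = of_real \<nu> * w (Suc q))"
  shows "\<exists>lam. lam \<noteq> 0 \<and> w (Suc i) = of_real lam * w q"
proof -
  have qm: "q < m" using pq i by simp
  obtain \<nu>0 where n0: "\<nu>0 > 0" "Vs a w (Suc q) (Suc i) = of_real \<nu>0 * w (Suc q)"
    using Vs_posmult[of "Suc q" "Suc i" w "w (Suc q)" a] pm pq i apos by auto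
  have g1: "cross (Vs a w q (Suc q)) (Vs a w (Suc q) (Suc (Suc i))) \<ge> 0"
    using good[of q "Suc q" "Suc (Suc i)"] pq i by simp
  have "Vs a w (Suc q) (Suc (Suc i)) = of_real (a (Suc i)) * Vs a w (Suc q) (Suc i) + w (Suc i)"
    using pq Vs_step[of "Suc q" "Suc i" a w] by simp
  also have "\<dots> = of_real (a (Suc i) * \<nu>0 * \<mu>) * w q + w (Suc i)" using n0 mu by simp
  finally have e: "Vs a w (Suc q) (Suc (Suc i)) = of_real (a (Suc i) * \<nu>0 * \<mu>) * w q + w (Suc i)" .
  have c1: "cross (w q) (w (Suc i)) \<ge> 0" using g1 unfolding e Vs_one cross_col .
  obtain \<nu>1 where n1: "\<nu>1 > 0" "w i = of_real \<nu>1 * w (Suc q)" using pm[rule_format, of i] pq(2) by auto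
  have "cross (w i) (w (Suc i)) \<ge> 0" using adj[OF i] .
  then have "(\<nu>1 * \<mu>) * cross (w q) (w (Suc i)) \<ge> 0" using n1 mu by simp
  moreover have "\<nu>1 * \<mu> < 0" using n1 mu by (simp add: mult_pos_neg)
  ultimately have "cross (w q) (w (Suc i)) \<le> 0" using neg_mult_nonneg[of "\<nu>1 * \<mu>"] by blast
  with c1 have "cross (w q) (w (Suc i)) = 0" by simp
  then obtain lam where l: "w (Suc i) = of_real lam * w q" using col_mult wnz[OF qm] by blast
  moreover have "lam \<noteq> 0" using l wnz[OF i] by auto
  ultimately show ?thesis by blast
qed

lemma fwd:
  assumes p: "Suc p < m" and mu: "\<mu> < 0" "w (Suc p) = of_real \<mu> * w p"
  shows "\<forall>i. p \<le> i \<and> i < m \<longrightarrow> (\<exists>c. w i = of_real c * w p)"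
proof -
  define F where "F i \<longleftrightarrow> (\<exists>q. p \<le> q \<and> q < i \<and> (\<exists>\<mu><0. w (Suc q) = of_real \<mu> * w q)
     \<and> (\<forall>r. Suc q \<le> r \<and> r \<le> i \<longrightarrow> (\<exists>\<nu>>0. w r = of_real \<nu> * w (Suc q)))
     \<and> (\<forall>r. p \<le> r \<and> r \<le> i \<longrightarrow> (\<exists>c. w r = of_real c * w p)))" for i
  have base: "F (Suc p)" unfolding F_def
  proof (intro exI[of _ p] conjI)
    show "\<exists>\<mu><0. w (Suc p) = of_real \<mu> * w p" using mu by blast
    show "\<forall>r. Suc p \<le> r \<and> r \<le> Suc p \<longrightarrow> (\<exists>\<nu>>0. w r = of_real \<nu> * w (Suc p))"
      by (intro allI impI exI[of _ 1]) auto
    show "\<forall>r. p \<le> r \<and> r \<le> Suc p \<longrightarrow> (\<exists>c. w r = of_real c * w p)"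
    proof (intro allI impI)
      fix r assume "p \<le> r \<and> r \<le> Suc p"
      then have "r = p \<or> r = Suc p" by auto
      then show "\<exists>c. w r = of_real c * w p" using mu by (metis mult_1 of_real_1)
    qed
  qed auto
  have step: "F (Suc i)" if i: "Suc p \<le> i" "Suc i < m" "F i" for i
  proof -
    obtain q \<mu>q where q: "p \<le> q" "q < i" "\<mu>q < 0" "w (Suc q) = of_real \<mu>q * w q"
      and pm: "\<forall>r. Suc q \<le> r \<and> r \<le> i \<longrightarrow> (\<exists>\<nu>>0. w r = of_real \<nu> * w (Suc q))"
      and cl: "\<forall>r. p \<le> r \<and> r \<le> i \<longrightarrow> (\<exists>c. w r = of_real c * w p)"
      using i(3) unfolding F_def by blast
    obtain lam where l: "lam \<noteq> 0" "w (Suc i) = of_real lam * w q"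
      using fwd_step[OF i(2) q(1,2) q(3,4) pm] by blast
    obtain cq where cq: "w q = of_real cq * w p" using cl[rule_format, of q] q(1,2) by auto
    have cl2: "\<forall>r. p \<le> r \<and> r \<le> Suc i \<longrightarrow> (\<exists>c. w r = of_real c * w p)"
    proof (intro allI impI)
      fix r assume r: "p \<le> r \<and> r \<le> Suc i"
      show "\<exists>c. w r = of_real c * w p"
      proof (cases "r = Suc i")
        case True
        then have "w r = of_real (lam * cq) * w p" using l cq by simp
        then show ?thesis by blast
      next
        case False
        then show ?thesis using cl r by auto
      qed
    qed
    show ?thesis
    proof (cases "lam < 0")
      case True
      have "\<forall>r. Suc q \<le> r \<and> r \<le> Suc i \<longrightarrow> (\<exists>\<nu>>0. w r = of_real \<nu> * w (Suc q))"
      proof (intro allI impI)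
        fix r assume r: "Suc q \<le> r \<and> r \<le> Suc i"
        show "\<exists>\<nu>>0. w r = of_real \<nu> * w (Suc q)"
        proof (cases "r = Suc i")
          case True
          have "w r = of_real (lam / \<mu>q) * w (Suc q)" using l q(3,4) True by simp
          moreover have "lam / \<mu>q > 0" using \<open>lam < 0\<close> q(3) by (simp add: divide_neg_neg)
          ultimately show ?thesis by blast
        next
          case False
          then show ?thesis using pm r by auto
        qed
      qed
      then show ?thesis unfolding F_def using q cl2 by (intro exI[of _ q]) auto
    next
      case False
      then have lp: "lam > 0" using l(1) by simp
      obtain \<nu>1 where n1: "\<nu>1 > 0" "w i = of_real \<nu>1 * w (Suc q)" using pm[rule_format, of i] q(2) by auto
      have wi: "w i = of_real (\<nu>1 * \<mu>q) * w q" using n1 q by simp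
      have nz: "\<nu>1 * \<mu>q \<noteq> 0" using n1 q by simp
      have "w (Suc i) = of_real (lam / (\<nu>1 * \<mu>q)) * w i" using wi l nz by simp
      moreover have "lam / (\<nu>1 * \<mu>q) < 0" using lp n1 q(3) by (simp add: divide_pos_neg mult_pos_neg)
      ultimately have "\<exists>\<mu><0. w (Suc i) = of_real \<mu> * w i" by blast
      moreover have "\<forall>r. Suc i \<le> r \<and> r \<le> Suc i \<longrightarrow> (\<exists>\<nu>>0. w r = of_real \<nu> * w (Suc i))"
        by (intro allI impI exI[of _ 1]) auto
      ultimately show ?thesis unfolding F_def using q cl2 i by (intro exI[of _ i]) auto
    qed
  qed
  have all: "\<forall>i. Suc p \<le> i \<longrightarrow> i < m \<longrightarrow> F i"
  proof (intro allI)
    fix i show "Suc p \<le> i \<longrightarrow> i < m \<longrightarrow> F i"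
    proof (induction i)
      case 0
      then show ?case by simp
    next
      case (Suc i)
      show ?case
      proof (intro impI)
        assume h: "Suc p \<le> Suc i" "Suc i < m"
        show "F (Suc i)"
        proof (cases "i = p")
          case True
          then show ?thesis using base by simp
        next
          case False
          then have "Suc p \<le> i" using h by simp
          then show ?thesis using step Suc.IH h by simp
        qed
      qed
    qed
  qed
  show ?thesis
  proof (intro allI impI)
    fix i assume i: "p \<le> i \<and> i < m"
    show "\<exists>c. w i = of_real c * w p"
    proof (cases "i = p")
      case True
      then show ?thesis by (intro exI[of _ 1]) simp
    next
      case False
      then have "F i" using all i by simp
      then show ?thesis unfolding F_def using i by blast
    qed
  qed
qed

lemma bwd_step:
  assumes qp: "q \<le> p" "Suc p < m" and jq: "Suc j \<le> q"
    and mu: "\<mu> < 0" "w (Suc q) = of_real \<mu> * w q"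
    and pm: "\<forall>r. Suc j \<le> r \<and> r \<le> q \<longrightarrow> (\<exists>\<nu>>0. w r = of_real \<nu> * w q)"
  shows "\<exists>lam. lam \<noteq> 0 \<and> w j = of_real lam * w q"
proof -
  have qm: "q < m" using qp by simp
  obtain \<nu>0 where n0: "\<nu>0 > 0" "Vs a w (Suc j) (Suc q) = of_real \<nu>0 * w q"
    using Vs_posmult[of "Suc j" "Suc q" w "w q" a] pm jq qp apos by auto
  have g1: "cross (Vs a w j (Suc q)) (Vs a w (Suc q) (Suc (Suc q))) \<ge> 0"
    using good[of j "Suc q" "Suc (Suc q)"] jq qp by simp
  define A where "A = (\<Prod>i\<in>{Suc j..<Suc q}. a i)"
  have Ap: "A > 0" unfolding A_def using prodpos[of m a "Suc q" "Suc j"] apos qp by auto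
  have "Vs a w j (Suc q) = of_real A * Vs a w j (Suc j) + Vs a w (Suc j) (Suc q)"
    unfolding A_def using jq by (intro Vs_split) auto
  then have e: "Vs a w j (Suc q) = of_real A * w j + of_real \<nu>0 * w q" using n0 by simp
  have "cross (of_real A * w j + of_real \<nu>0 * w q) (of_real \<mu> * w q) \<ge> 0"
    using g1 mu unfolding e Vs_one by simp
  then have "(A * \<mu>) * cross (w j) (w q) \<ge> 0" by (simp add: algebra_simps)
  moreover have "A * \<mu> < 0" using Ap mu by (simp add: mult_pos_neg)
  ultimately have c1: "cross (w j) (w q) \<le> 0" using neg_mult_nonneg[of "A * \<mu>"] by blast
  obtain \<nu>1 where n1: "\<nu>1 > 0" "w (Suc j) = of_real \<nu>1 * w q" using pm[rule_format, of "Suc j"] jq by auto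
  have "cross (w j) (w (Suc j)) \<ge> 0" using adj[of j] jq qp by simp
  moreover have "cross (w j) (w (Suc j)) = \<nu>1 * cross (w j) (w q)" unfolding n1(2) by (rule cross_scale_r)
  ultimately have "\<nu>1 * cross (w j) (w q) \<ge> 0" by simp
  then have "cross (w j) (w q) \<ge> 0" using pos_mult_nonneg[OF n1(1)] by blast
  with c1 have "cross (w q) (w j) = 0" using cross_anti[of "w q" "w j"] by simp
  then obtain lam where l: "w j = of_real lam * w q" using col_mult wnz[OF qm] by blast
  moreover have "lam \<noteq> 0" using l wnz[of j] jq qp by auto
  ultimately show ?thesis by blast
qed

lemma bwd:
  assumes p: "Suc p < m" and mu: "\<mu> < 0" "w (Suc p) = of_real \<mu> * w p"
  shows "\<forall>i\<le>p. \<exists>c. w i = of_real c * w p"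
proof -
  define B where "B j \<longleftrightarrow> (\<exists>q. j \<le> q \<and> q \<le> p \<and> (\<exists>\<mu><0. w (Suc q) = of_real \<mu> * w q)
     \<and> (\<forall>r. j \<le> r \<and> r \<le> q \<longrightarrow> (\<exists>\<nu>>0. w r = of_real \<nu> * w q))
     \<and> (\<forall>r. j \<le> r \<and> r \<le> p \<longrightarrow> (\<exists>c. w r = of_real c * w p)))" for j
  have base: "B p" unfolding B_def
  proof (intro exI[of _ p] conjI)
    show "\<exists>\<mu><0. w (Suc p) = of_real \<mu> * w p" using mu by blast
    show "\<forall>r. p \<le> r \<and> r \<le> p \<longrightarrow> (\<exists>\<nu>>0. w r = of_real \<nu> * w p)"
      by (intro allI impI exI[of _ 1]) auto
    show "\<forall>r. p \<le> r \<and> r \<le> p \<longrightarrow> (\<exists>c. w r = of_real c * w p)"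
      by (intro allI impI exI[of _ 1]) auto
  qed auto
  have step: "B j" if j: "j < p" "B (Suc j)" for j
  proof -
    obtain q \<mu>q where q: "Suc j \<le> q" "q \<le> p" "\<mu>q < 0" "w (Suc q) = of_real \<mu>q * w q"
      and pm: "\<forall>r. Suc j \<le> r \<and> r \<le> q \<longrightarrow> (\<exists>\<nu>>0. w r = of_real \<nu> * w q)"
      and cl: "\<forall>r. Suc j \<le> r \<and> r \<le> p \<longrightarrow> (\<exists>c. w r = of_real c * w p)"
      using j(2) unfolding B_def by blast
    obtain lam where l: "lam \<noteq> 0" "w j = of_real lam * w q"
      using bwd_step[OF q(2) p q(1) q(3,4) pm] by blast
    obtain cq where cq: "w q = of_real cq * w p" using cl[rule_format, of q] q(1,2) by auto
    have cl2: "\<forall>r. j \<le> r \<and> r \<le> p \<longrightarrow> (\<exists>c. w r = of_real c * w p)"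
    proof (intro allI impI)
      fix r assume r: "j \<le> r \<and> r \<le> p"
      show "\<exists>c. w r = of_real c * w p"
      proof (cases "r = j")
        case True
        then have "w r = of_real (lam * cq) * w p" using l cq by simp
        then show ?thesis by blast
      next
        case False
        then show ?thesis using cl r by auto
      qed
    qed
    show ?thesis
    proof (cases "lam > 0")
      case True
      have "\<forall>r. j \<le> r \<and> r \<le> q \<longrightarrow> (\<exists>\<nu>>0. w r = of_real \<nu> * w q)"
      proof (intro allI impI)
        fix r assume r: "j \<le> r \<and> r \<le> q"
        show "\<exists>\<nu>>0. w r = of_real \<nu> * w q"
        proof (cases "r = j")
          case True
          then show ?thesis using l \<open>lam > 0\<close> by blast
        next
          case False
          then show ?thesis using pm r by auto
        qed
      qed
      then show ?thesis unfolding B_def using q cl2 by (intro exI[of _ q]) auto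
    next
      case False
      then have ln: "lam < 0" using l(1) by simp
      obtain \<nu>1 where n1: "\<nu>1 > 0" "w (Suc j) = of_real \<nu>1 * w q" using pm[rule_format, of "Suc j"] q(1) by auto
      have "w (Suc j) = of_real (\<nu>1 / lam) * w j" using n1 l by simp
      moreover have "\<nu>1 / lam < 0" using ln n1 by (simp add: divide_pos_neg)
      ultimately have "\<exists>\<mu><0. w (Suc j) = of_real \<mu> * w j" by blast
      moreover have "\<forall>r. j \<le> r \<and> r \<le> j \<longrightarrow> (\<exists>\<nu>>0. w r = of_real \<nu> * w j)"
        by (intro allI impI exI[of _ 1]) auto
      ultimately show ?thesis unfolding B_def using q cl2 j by (intro exI[of _ j]) auto
    qed
  qed
  have all: "\<forall>d. d \<le> p \<longrightarrow> B (p - d)"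
  proof (intro allI)
    fix d show "d \<le> p \<longrightarrow> B (p - d)"
    proof (induction d)
      case 0
      then show ?case using base by simp
    next
      case (Suc d)
      show ?case
      proof
        assume h: "Suc d \<le> p"
        then have "Suc (p - Suc d) = p - d" by simp
        then show "B (p - Suc d)" using step[of "p - Suc d"] Suc.IH h by simp
      qed
    qed
  qed
  show ?thesis
  proof (intro allI impI)
    fix i assume i: "i \<le> p"
    then have "B i" using all[rule_format, of "p - i"] by simp
    then show "\<exists>c. w i = of_real c * w p" unfolding B_def using i by blast
  qed
qed

end


context cfg begin

definition Hp :: "complex \<Rightarrow> bool" where
  "Hp z \<longleftrightarrow> Im z > 0 \<or> (Im z = 0 \<and> Re z > 0)"

lemma real_of_Im0: "Im z = 0 \<Longrightarrow> z = of_real (Re z)"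
  by (simp add: complex_eq_iff)

lemma Hp_nz: "Hp z \<Longrightarrow> z \<noteq> 0"
  by (auto simp: Hp_def)

lemma noanti:
  assumes w0: "w 0 = 1" and ncol: "\<exists>i<m. Im (w i) \<noteq> 0" and p: "Suc p < m"
  shows "\<not> (cross (w p) (w (Suc p)) = 0 \<and> dot (w p) (w (Suc p)) < 0)"
proof
  assume h: "cross (w p) (w (Suc p)) = 0 \<and> dot (w p) (w (Suc p)) < 0"
  have pm: "p < m" using p by simp
  obtain \<mu> where mu: "w (Suc p) = of_real \<mu> * w p" using col_mult[OF wnz[OF pm]] h by blast
  have "dot (w p) (w (Suc p)) = \<mu> * (cmod (w p))^2" unfolding mu dot_scale_r dot_self ..
  moreover have "(cmod (w p))^2 > 0" using wnz[OF pm] by simp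
  ultimately have "\<mu> < 0" using h by (smt (verit) mult_nonneg_nonneg)
  have all: "\<exists>c. w i = of_real c * w p" if "i < m" for i
    using fwd[OF p \<open>\<mu> < 0\<close> mu] bwd[OF p \<open>\<mu> < 0\<close> mu] that by (cases "p \<le> i") auto
  obtain c0 where c0: "w 0 = of_real c0 * w p" using all[of 0] p by auto
  have "c0 \<noteq> 0" using c0 w0 by auto
  then have wp: "w p = of_real (1 / c0)" using c0 w0 by (simp add: field_simps)
  have "Im (w i) = 0" if im: "i < m" for i
  proof -
    obtain c where "w i = of_real c * w p" using all[OF im] by blast
    then show ?thesis unfolding wp by simp
  qed
  then show False using ncol by blast
qed

lemma F1: "Suc i < m \<Longrightarrow> cross (Vs a w 0 (Suc i)) (w i) \<ge> 0"
proof (cases i)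
  case 0
  then show ?thesis by simp
next
  case (Suc i')
  assume im: "Suc i < m"
  have g: "cross (Vs a w 0 i) (Vs a w i (Suc i)) \<ge> 0" using good[of 0 i "Suc i"] im Suc by simp
  have "Vs a w 0 (Suc i) = of_real (a i) * Vs a w 0 i + w i" by simp
  then have "cross (Vs a w 0 (Suc i)) (w i) = a i * cross (Vs a w 0 i) (w i)" by simp
  then show ?thesis using g apos[of i] im by simp
qed

lemma F2: "Suc i < m \<Longrightarrow> cross (Vs a w 0 (Suc i)) (w (Suc i)) \<ge> 0"
  using good[of 0 "Suc i" "Suc (Suc i)"] by simp

lemma stepB:
  assumes w0: "w 0 = 1" and ncol: "\<exists>i<m. Im (w i) \<noteq> 0" and i: "Suc i < m"
    and H: "Hp (Vs a w 0 (Suc i))"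
  shows "ang (w i) \<le> ang (w (Suc i))"
proof (rule window)
  show "Im (Vs a w 0 (Suc i)) > 0 \<or> (Im (Vs a w 0 (Suc i)) = 0 \<and> Re (Vs a w 0 (Suc i)) > 0)"
    using H unfolding Hp_def .
  show "w i \<noteq> 0" "w (Suc i) \<noteq> 0" using wnz i by auto
  show "Vs a w 0 (Suc i) \<noteq> 0" using Hp_nz[OF H] .
  show "cross (Vs a w 0 (Suc i)) (w i) \<ge> 0" using F1[OF i] .
  show "cross (Vs a w 0 (Suc i)) (w (Suc i)) \<ge> 0" using F2[OF i] .
  show "cross (w i) (w (Suc i)) \<ge> 0" using adj[OF i] .
  show "\<not> (cross (w i) (w (Suc i)) = 0 \<and> dot (w i) (w (Suc i)) < 0)" using noanti[OF w0 ncol i] .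
qed

lemma ImV0:
  assumes w0: "w 0 = 1" and k: "1 \<le> k" "k \<le> m"
  shows "Im (Vs a w 0 k) \<ge> 0"
proof (cases "k = 1")
  case True
  then show ?thesis using w0 by simp
next
  case False
  then have k2: "1 < k" using k by simp
  have g: "cross (Vs a w 0 1) (Vs a w 1 k) \<ge> 0" using good[of 0 1 k] k2 k by simp
  have "Vs a w 0 k = of_real (\<Prod>i\<in>{1..<k}. a i) * Vs a w 0 1 + Vs a w 1 k"
    using k2 by (intro Vs_split) auto
  then have "Im (Vs a w 0 k) = Im (Vs a w 1 k)" using w0 by (simp del: of_real_prod)
  moreover have "Im (Vs a w 1 k) \<ge> 0" using g w0 by (simp add: cross_ofreal[of 1, simplified])
  ultimately show ?thesis by simp
qed

lemma core:
  assumes w0: "w 0 = 1" and ncol: "\<exists>i<m. Im (w i) \<noteq> 0"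
  shows "\<exists>m0\<le>m. (\<forall>i. Suc i < m0 \<longrightarrow> ang (w i) \<le> ang (w (Suc i)))
          \<and> (\<forall>i. m0 \<le> i \<and> i < m \<longrightarrow> Im (w i) = 0 \<and> Re (w i) > 0)"
proof (cases "\<exists>k. 1 \<le> k \<and> k < m \<and> \<not> Hp (Vs a w 0 k)")
  case False
  have "\<forall>i. Suc i < m \<longrightarrow> ang (w i) \<le> ang (w (Suc i))"
  proof (intro allI impI)
    fix i assume i: "Suc i < m"
    then have "Hp (Vs a w 0 (Suc i))" using False by auto
    then show "ang (w i) \<le> ang (w (Suc i))" using stepB[OF w0 ncol i] by blast
  qed
  then show ?thesis by (intro exI[of _ m]) auto
next
  case True
  define k where "k = (LEAST k. 1 \<le> k \<and> k < m \<and> \<not> Hp (Vs a w 0 k))"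
  have k: "1 \<le> k" "k < m" "\<not> Hp (Vs a w 0 k)"
    using LeastI_ex[OF True] unfolding k_def by auto
  have kmin: "Hp (Vs a w 0 j)" if "1 \<le> j" "j < k" for j
    using not_less_Least[of j "\<lambda>k. 1 \<le> k \<and> k < m \<and> \<not> Hp (Vs a w 0 k)"] that k
    unfolding k_def by auto
  have k2: "2 \<le> k"
  proof (rule ccontr)
    assume "\<not> 2 \<le> k"
    then have "k = 1" using k by simp
    then show False using k(3) w0 by (simp add: Hp_def)
  qed
  have before: "ang (w i) \<le> ang (w (Suc i))" if i: "Suc i < k" for i
    using stepB[OF w0 ncol _ kmin[of "Suc i"]] i k by simp
  define P where "P = Vs a w 0 k"
  have ImP: "Im P = 0" and ReP: "Re P \<le> 0"
    using ImV0[OF w0, of k] k unfolding P_def Hp_def by auto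
  have R: "Im (Vs a w k j) = 0" if j: "k < j" "j \<le> m" for j
  proof -
    have "Vs a w 0 j = of_real (\<Prod>i\<in>{k..<j}. a i) * Vs a w 0 k + Vs a w k j"
      using j by (intro Vs_split) auto
    then have "Im (Vs a w 0 j) = Im (Vs a w k j)" using ImP unfolding P_def by (simp del: of_real_prod)
    then have ge: "Im (Vs a w k j) \<ge> 0" using ImV0[OF w0, of j] j k by simp
    have le: "Im (Vs a w k j) \<le> 0"
    proof (cases "Re P < 0")
      case True
      have "cross P (Vs a w k j) \<ge> 0" using good[of 0 k j] j k unfolding P_def by simp
      moreover have "P = of_real (Re P)" using ImP by (rule real_of_Im0)
      ultimately have "Re P * Im (Vs a w k j) \<ge> 0" by (metis cross_ofreal)
      then show ?thesis using True by (meson neg_mult_nonneg)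
    next
      case False
      then have P0: "P = 0" using ReP ImP by (simp add: complex_eq_iff)
      define A where "A = (\<Prod>i\<in>{1..<k}. a i)"
      have Ap: "A > 0" unfolding A_def using prodpos[of m a k 1] apos k by auto
      have "Vs a w 0 k = of_real A * Vs a w 0 1 + Vs a w 1 k"
        unfolding A_def using k2 by (intro Vs_split) auto
      then have "Vs a w 1 k = of_real (- A)" using P0 w0 unfolding P_def
        by (simp add: algebra_simps del: of_real_prod) (metis add.commute add_eq_0_iff2 of_real_minus)
      moreover have "cross (Vs a w 1 k) (Vs a w k j) \<ge> 0" using good[of 1 k j] j k2 by simp
      ultimately have "(- A) * Im (Vs a w k j) \<ge> 0" by (metis cross_ofreal)
      then show ?thesis using Ap by (meson neg_mult_nonneg neg_less_0_iff_less)
    qed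
    show ?thesis using ge le by simp
  qed
  have Imw: "Im (w i) = 0" if i: "k \<le> i" "i < m" for i
  proof (cases "i = k")
    case True
    then show ?thesis using R[of "Suc k"] k by simp
  next
    case False
    then have "k < i" using i by simp
    have "Vs a w k (Suc i) = of_real (a i) * Vs a w k i + w i" using i by simp
    then have "Im (w i) = Im (Vs a w k (Suc i)) - a i * Im (Vs a w k i)" by simp
    then show ?thesis using R[of "Suc i"] R[of i] \<open>k < i\<close> i by simp
  qed
  have Renz: "Re (w i) \<noteq> 0" if i: "k \<le> i" "i < m" for i
    using wnz[of i] Imw[OF i] i by (auto simp: complex_eq_iff)
  have samesign: "Re (w i) * Re (w (Suc i)) > 0" if i: "k \<le> i" "Suc i < m" for i
  proof -
    have na: "\<not> (cross (w i) (w (Suc i)) = 0 \<and> dot (w i) (w (Suc i)) < 0)" using noanti[OF w0 ncol i(2)] .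
    have "cross (w i) (w (Suc i)) = 0" using Imw[of i] Imw[of "Suc i"] i by (simp add: cross_def)
    then have "dot (w i) (w (Suc i)) \<ge> 0" using na by simp
    then have "Re (w i) * Re (w (Suc i)) \<ge> 0" using Imw[of i] Imw[of "Suc i"] i by (simp add: dot_def)
    moreover have "Re (w i) * Re (w (Suc i)) \<noteq> 0" using Renz[of i] Renz[of "Suc i"] i by simp
    ultimately show ?thesis by (metis less_eq_real_def)
  qed
  have sgn: "(Re (w i) > 0 \<longleftrightarrow> Re (w k) > 0)" if i: "k \<le> i" "i < m" for i
    using i
  proof (induction i)
    case 0
    then show ?case by simp
  next
    case (Suc i)
    show ?case
    proof (cases "Suc i = k")
      case True
      then show ?thesis by simp
    next
      case False
      then have "k \<le> i" using Suc by simp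
      then have "Re (w i) > 0 \<longleftrightarrow> Re (w k) > 0" using Suc by simp
      moreover have "Re (w i) * Re (w (Suc i)) > 0" using samesign[of i] \<open>k \<le> i\<close> Suc by simp
      ultimately show ?thesis by (smt (verit) mult_nonneg_nonpos mult_nonpos_nonneg)
    qed
  qed
  show ?thesis
  proof (cases "Re (w k) > 0")
    case True
    show ?thesis
    proof (intro exI[of _ k] conjI)
      show "k \<le> m" using k by simp
      show "\<forall>i. Suc i < k \<longrightarrow> ang (w i) \<le> ang (w (Suc i))" using before by blast
      show "\<forall>i. k \<le> i \<and> i < m \<longrightarrow> Im (w i) = 0 \<and> Re (w i) > 0" using Imw sgn True by blast
    qed
  next
    case False
    then have wkn: "Re (w k) < 0" using Renz[of k] k by simp
    have neg: "Re (w i) < 0" if "k \<le> i" "i < m" for i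
      using sgn[OF that] Renz[OF that] wkn by auto
    have pi: "ang (w i) = pi" if "k \<le> i" "i < m" for i
      using ang_negreal Imw[OF that] neg[OF that] by blast
    show ?thesis
    proof (intro exI[of _ m] conjI allI impI)
      fix i assume i: "Suc i < m"
      show "ang (w i) \<le> ang (w (Suc i))"
      proof (cases "Suc i < k")
        case True
        then show ?thesis using before by blast
      next
        case False
        show ?thesis
        proof (cases "Suc i = k")
          case True
          have "cross (w i) (w k) \<ge> 0" using adj[OF i] True by simp
          moreover have "w k = of_real (Re (w k))" using Imw[of k] k by (intro real_of_Im0) simp
          ultimately have "- Re (w k) * Im (w i) \<ge> 0" by (metis cross_ofreal_r)
          moreover have "- Re (w k) > 0" using wkn by simp
          ultimately have "Im (w i) \<ge> 0" using pos_mult_nonneg by blast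
          then have "ang (w i) \<le> pi" by (rule ang_Im_nonneg)
          then show ?thesis using pi[of k] k True by simp
        next
          case False
          then have "k \<le> i" using \<open>\<not> Suc i < k\<close> by simp
          then show ?thesis using pi[of i] pi[of "Suc i"] i by simp
        qed
      qed
    qed auto
  qed
qed

end


definition cmp :: "linfun \<Rightarrow> linfun \<Rightarrow> linfun" where
  "cmp g f = (fst g * fst f, fst g * snd f + snd g)"

definition compL :: "linfun list \<Rightarrow> linfun" where
  "compL xs = foldl (\<lambda>acc f. cmp f acc) (1, 0) xs"

lemma cmp_assoc: "cmp (cmp x y) z = cmp x (cmp y z)"
  by (simp add: cmp_def algebra_simps)

lemma cmp_id_r[simp]: "cmp x (1, 0) = x"
  by (simp add: cmp_def)

lemma cmp_id_l[simp]: "cmp (1, 0) x = x"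
  by (simp add: cmp_def)

lemma foldl_cmp: "foldl (\<lambda>acc f. cmp f acc) acc xs = cmp (compL xs) acc"
proof (induction xs arbitrary: acc)
  case Nil
  then show ?case by (simp add: compL_def)
next
  case (Cons x xs)
  have "foldl (\<lambda>acc f. cmp f acc) acc (x # xs) = cmp (compL xs) (cmp x acc)"
    using Cons by simp
  moreover have "compL (x # xs) = cmp (compL xs) x"
    unfolding compL_def using Cons[of "cmp x (1, 0)"] by (simp add: compL_def)
  ultimately show ?case by (simp add: cmp_assoc)
qed

lemma compL_Nil[simp]: "compL [] = (1, 0)"
  by (simp add: compL_def)

lemma compL_append: "compL (xs @ ys) = cmp (compL ys) (compL xs)"
  unfolding compL_def[of "xs @ ys"] foldl_append compL_def[of xs, symmetric] by (rule foldl_cmp)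

lemma compL_snoc: "compL (xs @ [f]) = cmp f (compL xs)"
  by (simp add: compL_append compL_def)

lemma compL_Cons: "compL (x # xs) = cmp (compL xs) x"
  using compL_append[of "[x]" xs] by (simp add: compL_def)

lemma lf_apply_cmp: "lf_apply (cmp g f) x = lf_apply g (lf_apply f x)"
  by (simp add: cmp_def lf_apply_def algebra_simps)

lemma fst_compL_pos: "\<forall>f\<in>set xs. fst f > 0 \<Longrightarrow> fst (compL xs) > 0"
  by (induction xs rule: rev_induct) (auto simp: compL_snoc cmp_def)

lemma comp_perm_compL: "comp_perm F \<sigma> k = lf_apply (compL (map (F \<circ> \<sigma>) [1..<k+1]))"
proof (induction k)
  case 0
  then show ?case by (auto simp: lf_apply_def)
next
  case (Suc k)
  show ?case
    by (rule ext) (simp add: Suc compL_snoc lf_apply_cmp)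
qed

lemma vec_cmp: "lf_vec (cmp g f) = of_real (fst g) * lf_vec f + lf_vec g"
  by (simp add: cmp_def lf_vec_def complex_eq_iff algebra_simps)

lemma identical_iff: "identical_lf f \<longleftrightarrow> f = (1, 0)"
proof
  assume h: "identical_lf f"
  have "lf_apply f 0 = 0" "lf_apply f 1 = 1" using h unfolding identical_lf_def by auto
  then show "f = (1, 0)" by (simp add: lf_apply_def prod_eq_iff)
qed (simp add: identical_lf_def lf_apply_def)

lemma vec_zero_iff: "lf_vec f = 0 \<longleftrightarrow> identical_lf f"
  by (auto simp: identical_iff lf_vec_def complex_eq_iff prod_eq_iff)

lemma compL_filter: "compL (filter (\<lambda>f. \<not> identical_lf f) xs) = compL xs"
  by (induction xs) (auto simp: compL_Cons identical_iff)

lemma vec_compL_Vs: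
  assumes "l \<le> j" "j \<le> length ys"
  shows "lf_vec (compL (take (j - l) (drop l ys))) = Vs (\<lambda>i. fst (ys!i)) (\<lambda>i. lf_vec (ys!i)) l j"
  using assms
proof (induction j)
  case 0
  then show ?case by (simp add: lf_vec_def complex_eq_iff)
next
  case (Suc j)
  show ?case
  proof (cases "l = Suc j")
    case True
    then show ?thesis by (simp add: lf_vec_def complex_eq_iff)
  next
    case False
    then have lj: "l \<le> j" "j < length ys" using Suc.prems by auto
    have "take (Suc j - l) (drop l ys) = take (j - l) (drop l ys) @ [ys ! j]"
    proof -
      have "Suc j - l = Suc (j - l)" using lj by simp
      moreover have "j - l < length (drop l ys)" using lj by simp
      moreover have "drop l ys ! (j - l) = ys ! j" using lj by simp
      ultimately show ?thesis by (simp add: take_Suc_conv_app_nth)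
    qed
    then have "lf_vec (compL (take (Suc j - l) (drop l ys))) =
        of_real (fst (ys!j)) * lf_vec (compL (take (j - l) (drop l ys))) + lf_vec (ys!j)"
      by (simp add: compL_snoc vec_cmp)
    then show ?thesis using Suc.IH lj by simp
  qed
qed

definition goodL :: "linfun list \<Rightarrow> bool" where
  "goodL xs \<longleftrightarrow> (\<forall>P A B S. xs = P @ A @ B @ S \<longrightarrow> A \<noteq> [] \<longrightarrow> B \<noteq> [] \<longrightarrow>
      cross (lf_vec (compL A)) (lf_vec (compL B)) \<ge> 0)"

lemma filter_split:
  "filter Q xs = ys @ zs \<Longrightarrow> \<exists>xs1 xs2. xs = xs1 @ xs2 \<and> filter Q xs1 = ys \<and> filter Q xs2 = zs"
proof (induction xs arbitrary: ys)
  case Nil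
  then show ?case by simp
next
  case (Cons x xs)
  show ?case
  proof (cases ys)
    case Nil
    then show ?thesis using Cons.prems by (intro exI[of _ "[]"] exI[of _ "x # xs"]) simp
  next
    case (Cons y ys')
    show ?thesis
    proof (cases "Q x")
      case True
      then have "x = y" "filter Q xs = ys' @ zs" using Cons.prems Cons by auto
      then obtain xs1 xs2 where "xs = xs1 @ xs2" "filter Q xs1 = ys'" "filter Q xs2 = zs"
        using Cons.IH by blast
      then show ?thesis using True Cons \<open>x = y\<close> by (intro exI[of _ "x # xs1"] exI[of _ xs2]) simp
    next
      case False
      then have "filter Q xs = ys @ zs" using Cons.prems by simp
      then obtain xs1 xs2 where "xs = xs1 @ xs2" "filter Q xs1 = ys" "filter Q xs2 = zs"
        using Cons.IH by blast
      then show ?thesis using False by (intro exI[of _ "x # xs1"] exI[of _ xs2]) simp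
    qed
  qed
qed

lemma goodL_filter:
  assumes "goodL xs"
  shows "goodL (filter (\<lambda>f. \<not> identical_lf f) xs)"
  unfolding goodL_def
proof (intro allI impI)
  fix P A B S
  assume h: "filter (\<lambda>f. \<not> identical_lf f) xs = P @ A @ B @ S" "A \<noteq> []" "B \<noteq> []"
  obtain X1 X2 where x: "xs = X1 @ X2" "filter (\<lambda>f. \<not> identical_lf f) X1 = P"
      "filter (\<lambda>f. \<not> identical_lf f) X2 = A @ B @ S"
    using filter_split[OF h(1)] by blast
  obtain Y1 Y2 where y: "X2 = Y1 @ Y2" "filter (\<lambda>f. \<not> identical_lf f) Y1 = A"
      "filter (\<lambda>f. \<not> identical_lf f) Y2 = B @ S"
    using filter_split[OF x(3)] by blast
  obtain Z1 Z2 where z: "Y2 = Z1 @ Z2" "filter (\<lambda>f. \<not> identical_lf f) Z1 = B"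
      "filter (\<lambda>f. \<not> identical_lf f) Z2 = S"
    using filter_split[OF y(3)] by blast
  have "xs = X1 @ Y1 @ Z1 @ Z2" using x y z by simp
  moreover have "Y1 \<noteq> []" "Z1 \<noteq> []" using y(2) z(2) h(2,3) by auto
  ultimately have "cross (lf_vec (compL Y1)) (lf_vec (compL Z1)) \<ge> 0"
    using assms unfolding goodL_def by blast
  moreover have "compL A = compL Y1" "compL B = compL Z1"
    using y(2) z(2) compL_filter by blast+
  ultimately show "cross (lf_vec (compL A)) (lf_vec (compL B)) \<ge> 0" by simp
qed

lemma goodL_idx:
  assumes "goodL ys" "l < k" "k < j" "j \<le> length ys"
  shows "cross (Vs (\<lambda>i. fst (ys!i)) (\<lambda>i. lf_vec (ys!i)) l k) (Vs (\<lambda>i. fst (ys!i)) (\<lambda>i. lf_vec (ys!i)) k j) \<ge> 0"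
proof -
  define A where "A = take (k - l) (drop l ys)"
  define B where "B = take (j - k) (drop k ys)"
  have d1: "drop l ys = A @ drop k ys"
    unfolding A_def using assms by (metis append_take_drop_id drop_drop le_add_diff_inverse2 less_imp_le)
  have d2: "drop k ys = B @ drop j ys"
    unfolding B_def using assms by (metis append_take_drop_id drop_drop le_add_diff_inverse2 less_imp_le)
  have "ys = take l ys @ A @ B @ drop j ys" using d1 d2 by (metis append_take_drop_id)
  moreover have "A \<noteq> []" "B \<noteq> []" unfolding A_def B_def using assms by auto
  ultimately have "cross (lf_vec (compL A)) (lf_vec (compL B)) \<ge> 0"
    using assms(1) unfolding goodL_def by blast
  then show ?thesis unfolding A_def B_def using assms
    by (simp add: vec_compL_Vs)
qed



lemma block_swap_map:
  assumes xs: "map (F \<circ> \<sigma>) [1..<n+1] = P @ A @ B @ S"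
  shows "map (F \<circ> block_swap \<sigma> (length P + 1) (length P + length A) (length P + length A + length B)) [1..<n+1]
         = P @ B @ A @ S"
proof -
  define p a b where "p = length P" "a = length A" "b = length B"
  have n: "n = p + a + b + length S" using arg_cong[OF xs, of length] by (simp add: p_a_b_def del: upt_Suc)
  have key: "F (\<sigma> (Suc t)) = (P @ A @ B @ S) ! t" if "t < n" for t
    using arg_cong[OF xs, of "\<lambda>l. l ! t"] that by (simp del: upt_Suc)
  show ?thesis
  proof (rule nth_equalityI)
    show "length (map (F \<circ> block_swap \<sigma> (length P + 1) (length P + length A) (length P + length A + length B)) [1..<n+1]) = length (P @ B @ A @ S)"
      using n by (simp add: p_a_b_def del: upt_Suc)
    fix i assume "i < length (map (F \<circ> block_swap \<sigma> (length P + 1) (length P + length A) (length P + length A + length B)) [1..<n+1])"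
    then have i: "i < n" by (simp del: upt_Suc)
    have lhs: "map (F \<circ> block_swap \<sigma> (length P + 1) (length P + length A) (length P + length A + length B)) [1..<n+1] ! i
        = F (block_swap \<sigma> (p + 1) (p + a) (p + a + b) (Suc i))"
      using i by (simp add: p_a_b_def del: upt_Suc)
    show "map (F \<circ> block_swap \<sigma> (length P + 1) (length P + length A) (length P + length A + length B)) [1..<n+1] ! i = (P @ B @ A @ S) ! i"
      unfolding lhs
    proof (cases "i < p")
      case True
      then have "block_swap \<sigma> (p + 1) (p + a) (p + a + b) (Suc i) = \<sigma> (Suc i)"
        by (simp add: block_swap_def)
      then show "F (block_swap \<sigma> (p + 1) (p + a) (p + a + b) (Suc i)) = (P @ B @ A @ S) ! i"
        using key[OF i] True by (simp add: nth_append_left p_a_b_def)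
    next
      case c1: False
      show "F (block_swap \<sigma> (p + 1) (p + a) (p + a + b) (Suc i)) = (P @ B @ A @ S) ! i"
      proof (cases "p + a + b \<le> i")
        case True
        then have "block_swap \<sigma> (p + 1) (p + a) (p + a + b) (Suc i) = \<sigma> (Suc i)"
          by (simp add: block_swap_def)
        moreover have "(P @ A @ B @ S) ! i = S ! (i - (p + a + b))"
          using True unfolding p_a_b_def by (simp add: nth_append_right)
        moreover have "(P @ B @ A @ S) ! i = S ! (i - (p + a + b))"
          using True unfolding p_a_b_def by (simp add: nth_append_right add.commute add.left_commute)
        ultimately show ?thesis using key[OF i] by simp
      next
        case c2: False
        show ?thesis
        proof (cases "i < p + b")
          case True
          then have "block_swap \<sigma> (p + 1) (p + a) (p + a + b) (Suc i) = \<sigma> (Suc (i + a))"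
            using c1 c2 by (simp add: block_swap_def)
          moreover have "i + a < n" using True n by simp
          moreover have "(P @ A @ B @ S) ! (i + a) = B ! (i - p)"
            using True c1 unfolding p_a_b_def by (simp add: nth_append_right nth_append_left)
          moreover have "(P @ B @ A @ S) ! i = B ! (i - p)"
            using True c1 unfolding p_a_b_def by (simp add: nth_append_right nth_append_left)
          ultimately show ?thesis using key[of "i + a"] by simp
        next
          case False
          then have "block_swap \<sigma> (p + 1) (p + a) (p + a + b) (Suc i) = \<sigma> (Suc (i - b))"
            using c1 c2 by (simp add: block_swap_def Suc_diff_le)
          moreover have "i - b < n" using i by simp
          moreover have "(P @ A @ B @ S) ! (i - b) = A ! (i - b - p)"
            using False c1 c2 unfolding p_a_b_def by (simp add: nth_append_right nth_append_left)
          moreover have "(P @ B @ A @ S) ! i = A ! (i - b - p)"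
            using False c1 c2 unfolding p_a_b_def by (simp add: nth_append_right nth_append_left add.commute)
          ultimately show ?thesis using key[of "i - b"] by simp
        qed
      qed
    qed
  qed
qed

lemma swap_cross:
  assumes "fst s > 0"
    and "lf_apply s (lf_apply b (lf_apply a y)) \<le> lf_apply s (lf_apply a (lf_apply b y))"
  shows "cross (lf_vec a) (lf_vec b) \<ge> 0"
proof -
  have "lf_apply b (lf_apply a y) \<le> lf_apply a (lf_apply b y)"
    using assms unfolding lf_apply_def by (simp add: mult_le_cancel_left_pos)
  then have "fst b * (fst a * y + snd a) + snd b \<le> fst a * (fst b * y + snd b) + snd a"
    unfolding lf_apply_def .
  then show ?thesis unfolding cross_def lf_vec_def by (simp add: algebra_simps)
qed

lemma lo_good:
  assumes mono: "\<forall>i\<in>{1..n}. monotone_lf (F i)" and perm: "\<sigma> permutes {1..n}"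
    and lo: "locally_optimal F n \<sigma>"
  shows "goodL (map (F \<circ> \<sigma>) [1..<n+1])"
  unfolding goodL_def
proof (intro allI impI)
  fix P A B S
  assume xs: "map (F \<circ> \<sigma>) [1..<n+1] = P @ A @ B @ S" and ne: "A \<noteq> []" "B \<noteq> []"
  have n: "n = length P + length A + length B + length S"
    using arg_cong[OF xs, of length] by (simp del: upt_Suc)
  define \<mu> where "\<mu> = block_swap \<sigma> (length P + 1) (length P + length A) (length P + length A + length B)"
  have c: "1 \<le> length P + 1 \<and> length P + 1 \<le> length P + length A \<and>
      length P + length A < length P + length A + length B \<and> length P + length A + length B \<le> n"
    using ne n by (auto simp: Suc_le_eq)
  have "\<mu> \<in> neighborhood n \<sigma>" unfolding neighborhood_def \<mu>_def using c by blast
  then have le: "comp_perm F \<sigma> n 0 \<le> comp_perm F \<mu> n 0" using lo unfolding locally_optimal_def by blast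
  have m2: "map (F \<circ> \<mu>) [1..<n+1] = P @ B @ A @ S" unfolding \<mu>_def by (rule block_swap_map[OF xs])
  have pos: "\<forall>f\<in>set (map (F \<circ> \<sigma>) [1..<n+1]). fst f > 0"
  proof
    fix f assume "f \<in> set (map (F \<circ> \<sigma>) [1..<n+1])"
    then obtain i where i: "i \<in> {1..n}" "f = F (\<sigma> i)" by (auto simp del: upt_Suc simp add: less_Suc_eq_le)
    have si: "\<sigma> i \<in> {1..n}" using permutes_in_image[OF perm, of i] i(1) by simp
    show "fst f > 0" using mono[rule_format, OF si] i(2) unfolding monotone_lf_def by simp
  qed
  then have posS: "\<forall>f\<in>set S. fst f > 0" unfolding xs by simp
  have "lf_apply (compL S) (lf_apply (compL B) (lf_apply (compL A) (lf_apply (compL P) 0)))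
      \<le> lf_apply (compL S) (lf_apply (compL A) (lf_apply (compL B) (lf_apply (compL P) 0)))"
    using le unfolding comp_perm_compL m2 xs by (simp only: compL_append lf_apply_cmp)
  then show "cross (lf_vec (compL A)) (lf_vec (compL B)) \<ge> 0"
    by (rule swap_cross[OF fst_compL_pos[OF posS]])
qed



lemma cross_cnj: "cross u v = Im (cnj u * v)"
  by (simp add: cross_def)

lemma cross_div:
  assumes "c \<noteq> 0"
  shows "cross (u / c) (v / c) = cross u v / (cmod c)^2"
proof -
  have "cnj (u / c) * (v / c) = cnj u * v / (cnj c * c)" by (simp add: field_simps)
  also have "cnj c * c = of_real ((cmod c)^2)" using complex_norm_square[of c] by (simp add: mult.commute)
  finally have e: "cnj (u / c) * (v / c) = cnj u * v / of_real ((cmod c)^2)" .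
  show ?thesis unfolding cross_cnj e by (simp only: Im_divide_of_real)
qed

lemma Vs_div: "Vs a (\<lambda>i. v i / c) l j = Vs a v l j / c"
  by (induction j) (auto simp: add_divide_distrib)

lemma mono_chain:
  assumes "\<forall>i. Suc i < m0 \<longrightarrow> f i \<le> (f (Suc i) :: real)" "i \<le> j" "j < m0"
  shows "f i \<le> f j"
  using assms(2,3)
proof (induction j)
  case 0
  then show ?case by simp
next
  case (Suc j)
  show ?case
  proof (cases "i = Suc j")
    case True
    then show ?thesis by simp
  next
    case False
    then have "f i \<le> f j" using Suc by simp
    also have "f j \<le> f (Suc j)" using assms(1) Suc.prems by blast
    finally show ?thesis .
  qed
qed

lemma ang_of_real_mult:
  assumes "c \<noteq> 0" "r \<noteq> 0"
  shows "\<exists>k::int. ang (c * of_real r) - ang c = of_int k * pi"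
proof (cases "r > 0")
  case True
  then have "Arg (c * of_real r) = Arg c" by simp
  then have "ang (c * of_real r) = ang c" by (simp add: ang_def)
  then show ?thesis by (intro exI[of _ 0]) simp
next
  case False
  then have rn: "- r > 0" using assms by simp
  have "c * of_real r = (- c) * of_real (- r)" by simp
  moreover have "Arg ((- c) * of_real (- r)) = Arg (- c)" using rn by (rule Arg_times_of_real2)
  ultimately have "Arg (c * of_real r) = Arg (- c)" by simp
  then have e: "ang (c * of_real r) = ang (- c)" by (simp add: ang_def)
  have "ang (- 1 :: complex) = pi" by (rule ang_negreal) simp_all
  then have "ang (- c) = ang c + pi \<or> ang (- c) = ang c + pi - 2 * pi"
    using ang_mult[OF assms(1), of "-1"] by simp
  then show ?thesis
  proof
    assume "ang (- c) = ang c + pi"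
    then show ?thesis using e by (intro exI[of _ 1]) simp
  next
    assume "ang (- c) = ang c + pi - 2 * pi"
    then show ?thesis using e by (intro exI[of _ "-1"]) simp
  qed
qed



theorem mainTheorem8:
  fixes F :: "nat \<Rightarrow> real \<times> real" and n :: nat and \<sigma> :: "nat \<Rightarrow> nat"
  assumes "\<forall>i\<in>{1..n}. monotone_lf (F i)"
    and "\<not> colinear F n"
    and "\<sigma> permutes {1..n}"
    and "locally_optimal F n \<sigma>"
  shows "counterclockwise F n \<sigma>"
proof -
  note mono = assms(1) and perm = assms(3)
  define xs where "xs = map (F \<circ> \<sigma>) [1..<n+1]"
  define ys where "ys = filter (\<lambda>f. \<not> identical_lf f) xs"
  define m where "m = length ys"
  have gx: "goodL xs" unfolding xs_def by (rule lo_good[OF assms(1) assms(3) assms(4)])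
  have gy: "goodL ys" unfolding ys_def by (rule goodL_filter[OF gx])
  have posx: "\<forall>f\<in>set xs. fst f > 0"
  proof
    fix f assume "f \<in> set xs"
    then obtain i where i: "i \<in> {1..n}" "f = F (\<sigma> i)" unfolding xs_def
      by (auto simp del: upt_Suc simp add: less_Suc_eq_le)
    have si: "\<sigma> i \<in> {1..n}" using permutes_in_image[OF perm, of i] i(1) by simp
    show "fst f > 0" using mono[rule_format, OF si] i(2) unfolding monotone_lf_def by simp
  qed
  have ysp: "fst f > 0" "lf_vec f \<noteq> 0" if "f \<in> set ys" for f
    using that posx vec_zero_iff[of f] unfolding ys_def by auto
  define c where "c = lf_vec (ys ! 0)"
  define af where "af = (\<lambda>i. fst (ys ! i))"
  define vf where "vf = (\<lambda>i. lf_vec (ys ! i))"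
  define w where "w = (\<lambda>i. vf i / c)"
  have vfnz: "vf i \<noteq> 0" if "i < m" for i
    using ysp(2)[of "ys ! i"] that unfolding vf_def m_def by simp
  have ncol: "\<exists>i<m. Im (w i) \<noteq> 0"
  proof (rule ccontr)
    assume h: "\<not> (\<exists>i<m. Im (w i) \<noteq> 0)"
    have "colinear F n" unfolding colinear_def
    proof (intro exI[of _ "ang c"] ballI)
      fix i assume i: "i \<in> {1..n}"
      show "theta (F i) = None \<or> (\<exists>t. theta (F i) = Some t \<and> (\<exists>k::int. t - ang c = of_int k * pi))"
      proof (cases "identical_lf (F i)")
        case True
        then show ?thesis using vec_zero_iff[of "F i"] by (simp add: theta_ang)
      next
        case False
        have ii: "inv \<sigma> i \<in> {1..n}" "\<sigma> (inv \<sigma> i) = i"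
          using permutes_in_image[OF permutes_inv[OF perm], of i] i permutes_inverses(1)[OF perm, of i]
          by auto
        have "F i \<in> set xs" unfolding xs_def using ii
          by (auto simp del: upt_Suc simp add: less_Suc_eq_le intro!: image_eqI[of _ _ "inv \<sigma> i"])
        then have "F i \<in> set ys" using False unfolding ys_def by simp
        then obtain t where t: "t < m" "ys ! t = F i" unfolding m_def by (metis in_set_conv_nth)
        have c0: "c \<noteq> 0" using vfnz[of 0] t unfolding c_def vf_def by simp
        have wt: "w t \<noteq> 0" using vfnz[OF t(1)] c0 unfolding w_def by simp
        have "Im (w t) = 0" using h t by auto
        then have wr: "w t = of_real (Re (w t))" by (simp add: complex_eq_iff)
        have r0: "Re (w t) \<noteq> 0" using wt wr by auto
        have "lf_vec (F i) = c * w t" using c0 t unfolding w_def vf_def by simp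
        then have "lf_vec (F i) = c * of_real (Re (w t))" using wr by simp
        then obtain k :: int where k: "ang (lf_vec (F i)) - ang c = of_int k * pi"
          using ang_of_real_mult[OF c0 r0] by auto
        have "theta (F i) = Some (ang (lf_vec (F i)))" using False vec_zero_iff[of "F i"] by (simp add: theta_ang)
        then show ?thesis using k by blast
      qed
    qed
    then show False using assms(2) by blast
  qed
  then have mpos: "0 < m" by auto
  have c0: "c \<noteq> 0" using vfnz[OF mpos] unfolding c_def vf_def by simp
  have w0: "w 0 = 1" using c0 unfolding w_def vf_def c_def by simp
  interpret cfg af w m
  proof
    fix i assume i: "i < m"
    show "w i \<noteq> 0" using vfnz[OF i] c0 unfolding w_def by simp
    show "af i > 0" using ysp(1)[of "ys ! i"] i unfolding af_def m_def by simp
  next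
    fix l k j assume h: "l < k" "k < j" "j \<le> m"
    have "cross (Vs af vf l k) (Vs af vf k j) \<ge> 0"
      using goodL_idx[OF gy h[unfolded m_def]] unfolding af_def vf_def .
    moreover have "Vs af w l k = Vs af vf l k / c" "Vs af w k j = Vs af vf k j / c"
      unfolding w_def by (rule Vs_div)+
    ultimately show "cross (Vs af w l k) (Vs af w k j) \<ge> 0"
      using c0 by (simp add: cross_div)
  qed
  obtain m0 where m0: "m0 \<le> m" "\<forall>i. Suc i < m0 \<longrightarrow> ang (w i) \<le> ang (w (Suc i))"
    "\<forall>i. m0 \<le> i \<and> i < m \<longrightarrow> Im (w i) = 0 \<and> Re (w i) > 0"
    using core[OF w0 ncol] by blast
  define \<beta> where "\<beta> = (\<lambda>i. if i < m0 then ang (w i) else 2 * pi)"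
  have aseq: "angle_seq F n \<sigma> = map (\<lambda>f. ang (lf_vec f)) ys"
  proof -
    have "ys = map (F \<circ> \<sigma>) (filter (\<lambda>i. \<not> identical_lf (F (\<sigma> i))) [1..<n+1])"
      unfolding ys_def xs_def by (simp add: filter_map o_def del: upt_Suc)
    then have "map (\<lambda>f. ang (lf_vec f)) ys =
        map (\<lambda>i. ang (lf_vec (F (\<sigma> i)))) (filter (\<lambda>i. \<not> identical_lf (F (\<sigma> i))) [1..<n+1])"
      by (simp del: upt_Suc)
    also have "\<dots> = angle_seq F n \<sigma>" unfolding angle_seq_def
      by (rule map_cong) (auto simp: theta_ang vec_zero_iff simp del: upt_Suc)
    finally show ?thesis by simp
  qed
  have vfw: "vf i = c * w i" for i using c0 unfolding w_def by simp
  show ?thesis unfolding counterclockwise_def aseq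
  proof (rule sorted_rotate_exists[of _ "ang c" \<beta>])
    show "\<forall>i<length (map (\<lambda>f. ang (lf_vec f)) ys).
        map (\<lambda>f. ang (lf_vec f)) ys ! i = ang c + \<beta> i \<or> map (\<lambda>f. ang (lf_vec f)) ys ! i = ang c + \<beta> i - 2 * pi"
    proof (intro allI impI)
      fix i assume "i < length (map (\<lambda>f. ang (lf_vec f)) ys)"
      then have i: "i < m" unfolding m_def by simp
      have e: "map (\<lambda>f. ang (lf_vec f)) ys ! i = ang (c * w i)"
        using i vfw[of i] unfolding m_def vf_def by simp
      have am: "ang (c * w i) = ang c + ang (w i) \<or> ang (c * w i) = ang c + ang (w i) - 2 * pi"
        using ang_mult[OF c0 wnz[OF i]] .
      show "map (\<lambda>f. ang (lf_vec f)) ys ! i = ang c + \<beta> i \<or> map (\<lambda>f. ang (lf_vec f)) ys ! i = ang c + \<beta> i - 2 * pi"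
      proof (cases "i < m0")
        case True
        then show ?thesis using e am unfolding \<beta>_def by simp
      next
        case False
        then have "Im (w i) = 0" "Re (w i) > 0" using m0(3) i by auto
        then have "ang (w i) = 0" by (rule ang_posreal)
        then have "ang (c * w i) = ang c"
          using am ang_bounds[of "c * w i"] ang_bounds[of c] by auto
        then show ?thesis using e False unfolding \<beta>_def by simp
      qed
    qed
    show "\<forall>i<length (map (\<lambda>f. ang (lf_vec f)) ys). 0 \<le> map (\<lambda>f. ang (lf_vec f)) ys ! i \<and> map (\<lambda>f. ang (lf_vec f)) ys ! i < 2 * pi"
      using ang_bounds by simp
    show "\<forall>i j. i \<le> j \<longrightarrow> j < length (map (\<lambda>f. ang (lf_vec f)) ys) \<longrightarrow> \<beta> i \<le> \<beta> j"
    proof (intro allI impI)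
      fix i j assume ij: "i \<le> j" "j < length (map (\<lambda>f. ang (lf_vec f)) ys)"
      show "\<beta> i \<le> \<beta> j"
      proof (cases "j < m0")
        case True
        then show ?thesis using mono_chain[OF m0(2) ij(1) True] ij unfolding \<beta>_def by simp
      next
        case False
        then show ?thesis using ang_bounds[of "w i"] unfolding \<beta>_def by simp
      qed
    qed
    show "\<forall>i<length (map (\<lambda>f. ang (lf_vec f)) ys). 0 \<le> \<beta> i \<and> \<beta> i \<le> 2 * pi"
      using ang_bounds unfolding \<beta>_def by (simp add: less_imp_le)
    show "0 \<le> ang c" "ang c < 2 * pi" using ang_bounds by auto
  qed
qed


end
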